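(* Let $\zeta$ be a nonconstant (holomorphic or formal) curve with $\zeta(0)=0$, let $\nu=\nu(\zeta)$ and let $k\geq 1$ be an integer. If $j_{2k\nu}(\zeta^*r)=0$, then there is a unitary infinite matrix $U_k\in\mathcal M_1$ (indeed $U_k\in\mathcal M_{1,N}$ for some $N$) such that $j_{2k\nu}(\zeta^*h)=0$ and $j_{k\nu}(\zeta^*(f-U_kg))=0$ (componentwise).
   Context: $r$ is a real $\mathcal C^\infty$ defining function of a hypersurface through $0\in\mathbb C^n$ ($r(0)=0$, $dr(0)\ne0$). Order the nonzero multi-indices $J\in\mathbb N^n$ by $J<K$ iff $|J|<|K|$, or $|J|=|K|$ and $J$ precedes $K$ lexicographically; enumerate them increasingly as $J^{(1)},J^{(2)},\dots$. Write the formal Taylor series of $r$ at $0$ as $r\sim 2\,\mathrm{Re}\,h+4\,\mathrm{Re}\sum_{J}\sum_{K\ge J}a_{JK}z^J\bar z^K$ ($J,K$ nonzero), with $h$ a formal holomorphic power series, $h(0)=0$, $a_{JK}\in\mathbb C$. Set $f_J=z^J+\sum_{K\ge J}\overline{a_{JK}}z^K$, $g_J=z^J-\sum_{K\ge J}\overline{a_{JK}}z^K$; then formally $r\sim 2\,\mathrm{Re}\,h+\sum_J|f_J|^2-\sum_J|g_J|^2$, and $f=(f_{J^{(m)}})_{m\ge1}$, $g=(g_{J^{(m)}})_{m\ge1}$ are viewed as infinite column vectors. For a formal power series $\varphi$ in $t,\bar t$ (or in $t$), $j_m(\varphi)$ is its truncation to terms of total degree $\le m$; $\zeta^*\varphi=\varphi\circ\zeta$.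 $\nu(\zeta)$ is the order of vanishing of $\zeta$ at $0$. $\mathcal M$ is the set of infinite complex matrices $\{a_{ij}\}_{i,j\ge1}$, products defined by $c_{i\ell}=\sum_k a_{ik}b_{k\ell}$ when convergent; $A^*=\{\overline{a_{ji}}\}$; $\mathcal M_1$ is the set of unitary ones ($AA^*=A^*A=I$); $\mathcal M_{1,N}\subset\mathcal M_1$ consists of those with $a_{ij}=\delta_{ij}$ whenever $\max\{i,j\}>N$. For $U\in\mathcal M_1$, $(Ug)_i=\sum_m U_{im}g_m$. *)

theory Defs
  imports "HOL-Analysis.Analysis" "HOL-Computational_Algebra.Formal_Power_Series"
begin

type_synonym mindex = "nat \<Rightarrow> nat"

definition mi :: "nat \<Rightarrow> mindex set" where
  "mi n = {J. \<forall>i. n \<le> i \<longrightarrow> J i = 0}"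

definition nzmi :: "nat \<Rightarrow> mindex set" where
  "nzmi n = {J \<in> mi n. J \<noteq> (\<lambda>_. 0)}"

definition mdeg :: "nat \<Rightarrow> mindex \<Rightarrow> nat" where
  "mdeg n J = (\<Sum>i<n. J i)"

definition lex_less :: "nat \<Rightarrow> mindex \<Rightarrow> mindex \<Rightarrow> bool" where
  "lex_less n J K \<longleftrightarrow> (\<exists>i<n. (\<forall>j<i. J j = K j) \<and> J i < K i)"

definition mi_less :: "nat \<Rightarrow> mindex \<Rightarrow> mindex \<Rightarrow> bool" where
  "mi_less n J K \<longleftrightarrow> mdeg n J < mdeg n K \<or> (mdeg n J = mdeg n K \<and> lex_less n J K)"

definition mi_le :: "nat \<Rightarrow> mindex \<Rightarrow> mindex \<Rightarrow> bool" where
  "mi_le n J K \<longleftrightarrow> J = K \<or> mi_less n J K"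

text \<open>Increasing enumeration J^(1), J^(2), ... of the nonzero multi-indices:
  J^(m) is the nonzero multi-index having exactly m-1 predecessors.\<close>
definition enum :: "nat \<Rightarrow> nat \<Rightarrow> mindex" where
  "enum n m = (THE J. J \<in> nzmi n \<and> card {K \<in> nzmi n. mi_less n K J} = m - 1)"

text \<open>A formal power series in z, zbar (n variables) is given by its coefficients:
  phi J K is the coefficient of z^J zbar^K. A formal holomorphic series is
  given by s J, the coefficient of z^J.\<close>
type_synonym biser = "mindex \<Rightarrow> mindex \<Rightarrow> complex"
type_synonym holser = "mindex \<Rightarrow> complex"

definition hol_bi :: "holser \<Rightarrow> biser" where
  "hol_bi s J K = (if K = (\<lambda>_. 0) then s J else 0)"

definition conj_bi :: "biser \<Rightarrow> biser" where
  "conj_bi \<phi> J K = cnj (\<phi> K J)"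

definition re_bi :: "biser \<Rightarrow> biser" where
  "re_bi \<phi> J K = (\<phi> J K + conj_bi \<phi> J K) / 2"

text \<open>The series sum_J sum_{K >= J} a_JK z^J zbar^K (J, K nonzero).\<close>
definition aser :: "nat \<Rightarrow> (mindex \<Rightarrow> mindex \<Rightarrow> complex) \<Rightarrow> biser" where
  "aser n a J K = (if J \<noteq> (\<lambda>_. 0) \<and> K \<noteq> (\<lambda>_. 0) \<and> mi_le n J K then a J K else 0)"

text \<open>The model 2 Re h + 4 Re sum_J sum_{K>=J} a_JK z^J zbar^K.\<close>
definition model :: "nat \<Rightarrow> holser \<Rightarrow> (mindex \<Rightarrow> mindex \<Rightarrow> complex) \<Rightarrow> biser" where
  "model n h a J K = 2 * re_bi (hol_bi h) J K + 4 * re_bi (aser n a) J K"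

text \<open>f_J = z^J + sum_{K>=J} conj(a_JK) z^K and g_J = z^J - sum_{K>=J} conj(a_JK) z^K.\<close>
definition fser :: "nat \<Rightarrow> (mindex \<Rightarrow> mindex \<Rightarrow> complex) \<Rightarrow> mindex \<Rightarrow> holser" where
  "fser n a J K = (if K = J then 1 else 0)
      + (if K \<noteq> (\<lambda>_. 0) \<and> mi_le n J K then cnj (a J K) else 0)"

definition gser :: "nat \<Rightarrow> (mindex \<Rightarrow> mindex \<Rightarrow> complex) \<Rightarrow> mindex \<Rightarrow> holser" where
  "gser n a J K = (if K = J then 1 else 0)
      - (if K \<noteq> (\<lambda>_. 0) \<and> mi_le n J K then cnj (a J K) else 0)"

definition fvec :: "nat \<Rightarrow> (mindex \<Rightarrow> mindex \<Rightarrow> complex) \<Rightarrow> nat \<Rightarrow> holser" where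
  "fvec n a m = fser n a (enum n m)"

definition gvec :: "nat \<Rightarrow> (mindex \<Rightarrow> mindex \<Rightarrow> complex) \<Rightarrow> nat \<Rightarrow> holser" where
  "gvec n a m = gser n a (enum n m)"

type_synonym imat = "nat \<Rightarrow> nat \<Rightarrow> complex"

definition adj :: "imat \<Rightarrow> imat" where
  "adj A i j = cnj (A j i)"

definition prod_entry_sums :: "imat \<Rightarrow> imat \<Rightarrow> nat \<Rightarrow> nat \<Rightarrow> complex \<Rightarrow> bool" where
  "prod_entry_sums A B i l c \<longleftrightarrow> (\<lambda>k. A i (Suc k) * B (Suc k) l) sums c"

definition M1 :: "imat set" where
  "M1 = {A. \<forall>i\<ge>1. \<forall>l\<ge>1.
      prod_entry_sums A (adj A) i l (if i = l then 1 else 0) \<and>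
      prod_entry_sums (adj A) A i l (if i = l then 1 else 0)}"

definition M1N :: "nat \<Rightarrow> imat set" where
  "M1N N = {A \<in> M1. \<forall>i\<ge>1. \<forall>j\<ge>1. max i j > N \<longrightarrow> A i j = (if i = j then 1 else 0)}"

definition matvec :: "imat \<Rightarrow> (nat \<Rightarrow> holser) \<Rightarrow> nat \<Rightarrow> holser" where
  "matvec U v i K = (\<Sum>\<^sub>\<infinity>m\<in>{1..}. U i m * v m K)"

text \<open>A formal curve zeta in C^n: components zeta i (i < n) are formal power series in t.\<close>
definition zpow :: "nat \<Rightarrow> (nat \<Rightarrow> complex fps) \<Rightarrow> mindex \<Rightarrow> complex fps" where
  "zpow n \<zeta> J = (\<Prod>i<n. \<zeta> i ^ J i)"

definition nu :: "nat \<Rightarrow> (nat \<Rightarrow> complex fps) \<Rightarrow> nat" where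
  "nu n \<zeta> = (LEAST m. \<exists>i<n. fps_nth (\<zeta> i) m \<noteq> 0)"

text \<open>Coefficient of t^p in zeta^* s. Since zeta(0) = 0, zeta^J has order >= |J|,
  so only multi-indices with |J| <= p contribute (this is the usual composition).\<close>
definition pb_hol :: "nat \<Rightarrow> (nat \<Rightarrow> complex fps) \<Rightarrow> holser \<Rightarrow> nat \<Rightarrow> complex" where
  "pb_hol n \<zeta> s p = (\<Sum>J\<in>{J \<in> mi n. mdeg n J \<le> p}. s J * fps_nth (zpow n \<zeta> J) p)"

definition pb_bi :: "nat \<Rightarrow> (nat \<Rightarrow> complex fps) \<Rightarrow> biser \<Rightarrow> nat \<Rightarrow> nat \<Rightarrow> complex" where
  "pb_bi n \<zeta> \<phi> p q = (\<Sum>J\<in>{J \<in> mi n. mdeg n J \<le> p}. \<Sum>K\<in>{K \<in> mi n. mdeg n K \<le> q}.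
      \<phi> J K * fps_nth (zpow n \<zeta> J) p * cnj (fps_nth (zpow n \<zeta> K) q))"

definition jet_bi_zero :: "nat \<Rightarrow> (nat \<Rightarrow> nat \<Rightarrow> complex) \<Rightarrow> bool" where
  "jet_bi_zero m \<psi> \<longleftrightarrow> (\<forall>p q. p + q \<le> m \<longrightarrow> \<psi> p q = 0)"

definition jet_hol_zero :: "nat \<Rightarrow> (nat \<Rightarrow> complex) \<Rightarrow> bool" where
  "jet_hol_zero m \<psi> \<longleftrightarrow> (\<forall>p\<le>m. \<psi> p = 0)"

end

theory Submission
  imports Defs
begin


definition ipI :: "nat set \<Rightarrow> (nat \<Rightarrow> complex) \<Rightarrow> (nat \<Rightarrow> complex) \<Rightarrow> complex" where
  "ipI I v w = (\<Sum>i\<in>I. v i * cnj (w i))"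

definition mvI :: "nat set \<Rightarrow> (nat \<Rightarrow> nat \<Rightarrow> complex) \<Rightarrow> (nat \<Rightarrow> complex) \<Rightarrow> nat \<Rightarrow> complex" where
  "mvI I A v i = (\<Sum>j\<in>I. A i j * v j)"

definition mmI :: "nat set \<Rightarrow> (nat \<Rightarrow> nat \<Rightarrow> complex) \<Rightarrow> (nat \<Rightarrow> nat \<Rightarrow> complex) \<Rightarrow> nat \<Rightarrow> nat \<Rightarrow> complex" where
  "mmI I A B i j = (\<Sum>a\<in>I. A i a * B a j)"

definition unitI :: "nat set \<Rightarrow> (nat \<Rightarrow> nat \<Rightarrow> complex) \<Rightarrow> bool" where
  "unitI I A \<longleftrightarrow> (\<forall>i\<in>I. \<forall>l\<in>I. (\<Sum>k\<in>I. A i k * cnj (A l k)) = (if i = l then 1 else 0)) \<and>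
                  (\<forall>i\<in>I. \<forall>l\<in>I. (\<Sum>k\<in>I. cnj (A k i) * A k l) = (if i = l then 1 else 0))"

lemma unitI_id: "finite I \<Longrightarrow> unitI I (\<lambda>i j. if i = j then 1 else 0)"
proof -
  have e: "\<And>i l k. (if i = k then 1 else 0) * cnj (if l = k then 1 else (0::complex)) = (if k = i then (if l = i then 1 else 0) else 0)"
    "\<And>i l k. cnj (if k = i then 1 else 0) * (if k = l then 1 else (0::complex)) = (if k = i then (if l = i then 1 else 0) else 0)"
    by auto
  show "finite I \<Longrightarrow> ?thesis" unfolding unitI_def e by (auto simp: sum.delta)
qed

lemma unitI_mult:
  assumes fin: "finite I" and H: "unitI I H" and A: "unitI I A"
  shows "unitI I (mmI I H A)"
proof -
  have H1: "\<And>i l. i \<in> I \<Longrightarrow> l \<in> I \<Longrightarrow> (\<Sum>k\<in>I. H i k * cnj (H l k)) = (if i = l then 1 else 0)"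
   and H2: "\<And>i l. i \<in> I \<Longrightarrow> l \<in> I \<Longrightarrow> (\<Sum>k\<in>I. cnj (H k i) * H k l) = (if i = l then 1 else 0)"
    using H unfolding unitI_def by auto
  have A1: "\<And>i l. i \<in> I \<Longrightarrow> l \<in> I \<Longrightarrow> (\<Sum>k\<in>I. A i k * cnj (A l k)) = (if i = l then 1 else 0)"
   and A2: "\<And>i l. i \<in> I \<Longrightarrow> l \<in> I \<Longrightarrow> (\<Sum>k\<in>I. cnj (A k i) * A k l) = (if i = l then 1 else 0)"
    using A unfolding unitI_def by auto
  have P1: "(\<Sum>k\<in>I. mmI I H A i k * cnj (mmI I H A l k)) = (if i = l then 1 else 0)"
    if i: "i \<in> I" and l: "l \<in> I" for i l
  proof -
    have "(\<Sum>k\<in>I. mmI I H A i k * cnj (mmI I H A l k))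
        = (\<Sum>k\<in>I. \<Sum>b\<in>I. \<Sum>a\<in>I. H i a * cnj (H l b) * (A a k * cnj (A b k)))"
      unfolding mmI_def by (simp add: sum_distrib_left sum_distrib_right mult_ac)
    also have "\<dots> = (\<Sum>b\<in>I. \<Sum>a\<in>I. \<Sum>k\<in>I. H i a * cnj (H l b) * (A a k * cnj (A b k)))"
      by (subst sum.swap, rule sum.cong[OF refl], rule sum.swap)
    also have "\<dots> = (\<Sum>b\<in>I. \<Sum>a\<in>I. H i a * cnj (H l b) * (if a = b then 1 else 0))"
      by (intro sum.cong refl) (simp add: sum_distrib_left[symmetric] A1)
    also have "\<dots> = (\<Sum>b\<in>I. H i b * cnj (H l b))"
      by (intro sum.cong refl) (simp add: if_distrib fin cong: if_cong)
    also have "\<dots> = (if i = l then 1 else 0)" using H1 i l by simp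
    finally show ?thesis .
  qed
  have P2: "(\<Sum>k\<in>I. cnj (mmI I H A k i) * mmI I H A k l) = (if i = l then 1 else 0)"
    if i: "i \<in> I" and l: "l \<in> I" for i l
  proof -
    have "(\<Sum>k\<in>I. cnj (mmI I H A k i) * mmI I H A k l)
        = (\<Sum>k\<in>I. \<Sum>a\<in>I. \<Sum>b\<in>I. cnj (A a i) * A b l * (cnj (H k a) * H k b))"
      unfolding mmI_def by (simp add: sum_distrib_left sum_distrib_right mult_ac)
    also have "\<dots> = (\<Sum>a\<in>I. \<Sum>b\<in>I. \<Sum>k\<in>I. cnj (A a i) * A b l * (cnj (H k a) * H k b))"
      by (subst sum.swap, rule sum.cong[OF refl], rule sum.swap)
    also have "\<dots> = (\<Sum>a\<in>I. \<Sum>b\<in>I. cnj (A a i) * A b l * (if a = b then 1 else 0))"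
      by (intro sum.cong refl) (simp add: sum_distrib_left[symmetric] H2)
    also have "\<dots> = (\<Sum>a\<in>I. cnj (A a i) * A a l)"
      by (intro sum.cong refl) (simp add: if_distrib fin cong: if_cong)
    also have "\<dots> = (if i = l then 1 else 0)" using A2 i l by simp
    finally show ?thesis .
  qed
  show ?thesis unfolding unitI_def using P1 P2 by blast
qed

lemma mvI_mmI: "finite I \<Longrightarrow> mvI I (mmI I H A) v i = mvI I H (mvI I A v) i"
proof -
  have "mvI I (mmI I H A) v i = (\<Sum>j\<in>I. \<Sum>a\<in>I. H i a * (A a j * v j))"
    unfolding mvI_def mmI_def by (rule sum.cong[OF refl]) (simp add: sum_distrib_right sum_distrib_left mult_ac)
  also have "\<dots> = (\<Sum>a\<in>I. \<Sum>j\<in>I. H i a * (A a j * v j))" by (rule sum.swap)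
  also have "\<dots> = mvI I H (mvI I A v) i" unfolding mvI_def by (simp add: sum_distrib_left)
  finally show ?thesis .
qed

lemma ipI_unit:
  assumes fin: "finite I" and A: "unitI I A"
  shows "ipI I (mvI I A v) (mvI I A w) = ipI I v w"
proof -
  have A2: "\<And>i l. i \<in> I \<Longrightarrow> l \<in> I \<Longrightarrow> (\<Sum>k\<in>I. cnj (A k i) * A k l) = (if i = l then 1 else 0)"
    using A unfolding unitI_def by auto
  have "ipI I (mvI I A v) (mvI I A w) = (\<Sum>k\<in>I. \<Sum>b\<in>I. \<Sum>a\<in>I. v a * cnj (w b) * (cnj (A k b) * A k a))"
    unfolding ipI_def mvI_def by (simp add: sum_distrib_left sum_distrib_right mult_ac)
  also have "\<dots> = (\<Sum>b\<in>I. \<Sum>a\<in>I. \<Sum>k\<in>I. v a * cnj (w b) * (cnj (A k b) * A k a))"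
    by (subst sum.swap, rule sum.cong[OF refl], rule sum.swap)
  also have "\<dots> = (\<Sum>b\<in>I. \<Sum>a\<in>I. v a * cnj (w b) * (if b = a then 1 else 0))"
    by (intro sum.cong refl) (simp add: sum_distrib_left[symmetric] A2)
  also have "\<dots> = ipI I v w"
    unfolding ipI_def by (intro sum.cong refl) (simp add: if_distrib fin cong: if_cong)
  finally show ?thesis .
qed

definition hh :: "(nat \<Rightarrow> complex) \<Rightarrow> complex \<Rightarrow> nat \<Rightarrow> nat \<Rightarrow> complex" where
  "hh d \<beta> i j = (if i = j then 1 else 0) - \<beta> * d i * cnj (d j)"

lemma hh_unit:
  assumes fin: "finite I" and cond: "\<beta> + cnj \<beta> = \<beta> * cnj \<beta> * ipI I d d"
  shows "unitI I (hh d \<beta>)"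
proof -
  have key: "\<beta> * cnj \<beta> * X * ipI I d d = (\<beta> + cnj \<beta>) * X" for X
    using cond by (simp add: mult_ac)
  have P1: "(\<Sum>k\<in>I. hh d \<beta> i k * cnj (hh d \<beta> l k)) = (if i = l then 1 else 0)"
    if i: "i \<in> I" and l: "l \<in> I" for i l
  proof -
    have "(\<Sum>k\<in>I. hh d \<beta> i k * cnj (hh d \<beta> l k)) =
      (\<Sum>k\<in>I. (if k = i then (if l = i then 1 else 0) else 0) - (if k = i then cnj \<beta> * cnj (d l) * d k else 0)
         - (if k = l then \<beta> * d i * cnj (d k) else 0) + \<beta> * cnj \<beta> * (d i * cnj (d l)) * (d k * cnj (d k)))"
      by (rule sum.cong) (auto simp: hh_def algebra_simps)
    also have "\<dots> = (if l = i then 1 else 0) - cnj \<beta> * cnj (d l) * d i - \<beta> * d i * cnj (d l)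
         + \<beta> * cnj \<beta> * (d i * cnj (d l)) * ipI I d d"
      using i l fin by (simp add: sum.distrib sum_subtractf ipI_def sum_distrib_left)
    also have "\<dots> = (if i = l then 1 else 0)"
      unfolding key by (simp add: algebra_simps)
    finally show ?thesis .
  qed
  have P2: "(\<Sum>k\<in>I. cnj (hh d \<beta> k i) * hh d \<beta> k l) = (if i = l then 1 else 0)"
    if i: "i \<in> I" and l: "l \<in> I" for i l
  proof -
    have "(\<Sum>k\<in>I. cnj (hh d \<beta> k i) * hh d \<beta> k l) =
      (\<Sum>k\<in>I. (if k = i then (if l = i then 1 else 0) else 0) - (if k = l then cnj \<beta> * cnj (d k) * d i else 0)
         - (if k = i then \<beta> * d k * cnj (d l) else 0) + \<beta> * cnj \<beta> * (d i * cnj (d l)) * (d k * cnj (d k)))"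
      by (rule sum.cong) (auto simp: hh_def algebra_simps)
    also have "\<dots> = (if l = i then 1 else 0) - cnj \<beta> * cnj (d l) * d i - \<beta> * d i * cnj (d l)
         + \<beta> * cnj \<beta> * (d i * cnj (d l)) * ipI I d d"
      using i l fin by (simp add: sum.distrib sum_subtractf ipI_def sum_distrib_left)
    also have "\<dots> = (if i = l then 1 else 0)"
      unfolding key by (simp add: algebra_simps)
    finally show ?thesis .
  qed
  show ?thesis unfolding unitI_def using P1 P2 by blast
qed

lemma mvI_hh: "finite I \<Longrightarrow> i \<in> I \<Longrightarrow> mvI I (hh d \<beta>) v i = v i - \<beta> * d i * ipI I v d"
proof -
  assume fin: "finite I" and i: "i \<in> I"
  have "mvI I (hh d \<beta>) v i = (\<Sum>j\<in>I. (if j = i then v j else 0) - \<beta> * d i * (v j * cnj (d j)))"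
    unfolding mvI_def by (rule sum.cong) (auto simp: hh_def algebra_simps)
  also have "\<dots> = v i - \<beta> * d i * ipI I v d"
    using fin i by (simp add: sum_subtractf sum.delta ipI_def sum_distrib_left)
  finally show ?thesis .
qed

lemma ipI_self_zero:
  assumes fin: "finite I" and z: "ipI I d d = 0" and i: "i \<in> I"
  shows "d i = 0"
proof -
  have "ipI I d d = complex_of_real (\<Sum>j\<in>I. (cmod (d j))\<^sup>2)"
  proof -
    have "\<And>z. z * cnj z = complex_of_real ((cmod z)\<^sup>2)" using complex_norm_square by simp
    then show ?thesis unfolding ipI_def by simp
  qed
  then have "(\<Sum>j\<in>I. (cmod (d j))\<^sup>2) = 0" using z of_real_eq_0_iff by metis
  then have "\<forall>j\<in>I. (cmod (d j))\<^sup>2 = 0" using fin by (simp add: sum_nonneg_eq_0_iff)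
  then show ?thesis using i by simp
qed

lemma ipI_cong: "(\<And>i. i \<in> I \<Longrightarrow> v i = v' i) \<Longrightarrow> (\<And>i. i \<in> I \<Longrightarrow> w i = w' i) \<Longrightarrow> ipI I v w = ipI I v' w'"
  unfolding ipI_def by simp

lemma mvI_cong: "(\<And>i. i \<in> I \<Longrightarrow> v i = v' i) \<Longrightarrow> mvI I A v j = mvI I A v' j"
  unfolding mvI_def by simp

lemma gram_unitary:
  fixes r :: nat
  assumes fin: "finite I"
  shows "(\<forall>p<r. \<forall>q<r. ipI I (u p) (u q) = ipI I (w p) (w q)) \<Longrightarrow>
     \<exists>A. unitI I A \<and> (\<forall>p<r. \<forall>i\<in>I. mvI I A (w p) i = u p i)"
proof (induction r)
  case 0
  then show ?case using unitI_id[OF fin] by blast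
next
  case (Suc r)
  from Suc.prems have G: "\<And>p q. p < Suc r \<Longrightarrow> q < Suc r \<Longrightarrow> ipI I (u p) (u q) = ipI I (w p) (w q)" by blast
  from Suc.IH G obtain A where A: "unitI I A" and Aw: "\<And>p i. p < r \<Longrightarrow> i \<in> I \<Longrightarrow> mvI I A (w p) i = u p i"
    by force
  define x where "x = mvI I A (w r)"
  define y where "y = u r"
  define d where "d = (\<lambda>i. x i - y i)"
  define \<alpha> where "\<alpha> = ipI I x d"
  define \<beta> where "\<beta> = inverse \<alpha>"
  have xx: "ipI I x x = ipI I y y"
    unfolding x_def y_def ipI_unit[OF fin A] using G[of r r] by simp
  have orth: "ipI I (u p) d = 0" if p: "p < r" for p
  proof -
    have "ipI I (u p) x = ipI I (mvI I A (w p)) x"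
      by (rule ipI_cong) (use Aw p in auto)
    also have "\<dots> = ipI I (w p) (w r)" unfolding x_def ipI_unit[OF fin A] ..
    also have "\<dots> = ipI I (u p) y" unfolding y_def using G[of p r] p by simp
    finally have "ipI I (u p) x = ipI I (u p) y" .
    moreover have "ipI I (u p) d = ipI I (u p) x - ipI I (u p) y"
      unfolding ipI_def d_def by (simp add: sum_subtractf algebra_simps)
    ultimately show ?thesis by simp
  qed
  have dd: "ipI I d d = \<alpha> + cnj \<alpha>"
  proof -
    have "ipI I d d = \<alpha> + cnj \<alpha> + (ipI I y y - ipI I x x)"
      unfolding \<alpha>_def ipI_def d_def
      by (simp add: sum.distrib[symmetric] sum_subtractf[symmetric] algebra_simps)
    then show ?thesis using xx by simp
  qed
  have cond: "\<beta> + cnj \<beta> = \<beta> * cnj \<beta> * ipI I d d"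
  proof (cases "\<alpha> = 0")
    case True then show ?thesis by (simp add: \<beta>_def)
  next
    case False
    then have "cnj \<alpha> \<noteq> 0" by simp
    then show ?thesis unfolding dd \<beta>_def using False
      by (simp add: field_simps)
  qed
  define H where "H = hh d \<beta>"
  have HU: "unitI I H" unfolding H_def by (rule hh_unit[OF fin cond])
  have Hx: "mvI I H x i = y i" if i: "i \<in> I" for i
  proof (cases "\<alpha> = 0")
    case True
    then have "ipI I d d = 0" using dd by simp
    then have "d i = 0" using ipI_self_zero[OF fin _ i] by blast
    then show ?thesis unfolding H_def mvI_hh[OF fin i] using True by (simp add: d_def \<beta>_def)
  next
    case False
    then show ?thesis unfolding H_def mvI_hh[OF fin i] \<alpha>_def[symmetric] \<beta>_def
      by (simp add: d_def field_simps)
  qed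
  have Hu: "mvI I H (u p) i = u p i" if p: "p < r" and i: "i \<in> I" for p i
    unfolding H_def mvI_hh[OF fin i] using orth[OF p] by simp
  show ?case
  proof (intro exI conjI allI impI ballI)
    show "unitI I (mmI I H A)" by (rule unitI_mult[OF fin HU A])
    fix p i assume p: "p < Suc r" and i: "i \<in> I"
    show "mvI I (mmI I H A) (w p) i = u p i"
    proof (cases "p = r")
      case True
      then show ?thesis unfolding mvI_mmI[OF fin] using Hx[OF i] by (simp add: x_def y_def)
    next
      case False
      then have pr: "p < r" using p by simp
      have "mvI I (mmI I H A) (w p) i = mvI I H (mvI I A (w p)) i" by (rule mvI_mmI[OF fin])
      also have "\<dots> = mvI I H (u p) i" by (rule mvI_cong) (use Aw pr in auto)
      also have "\<dots> = u p i" by (rule Hu[OF pr i])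
      finally show ?thesis .
    qed
  qed
qed




lemma fin_deg: "finite {J \<in> mi n. mdeg n J \<le> d}"
proof -
  let ?f = "\<lambda>K' i. if i < n then K' i else (0::nat)"
  have "{J \<in> mi n. mdeg n J \<le> d} \<subseteq> ?f ` (PiE {..<n} (\<lambda>_. {0..d}))"
  proof
    fix J assume J: "J \<in> {J \<in> mi n. mdeg n J \<le> d}"
    then have z: "\<And>i. n \<le> i \<Longrightarrow> J i = 0" and dd: "mdeg n J \<le> d" by (auto simp: mi_def)
    have le: "J i \<le> d" if "i < n" for i
    proof -
      have "J i \<le> (\<Sum>i<n. J i)" by (rule member_le_sum) (use that in auto)
      then show ?thesis using dd unfolding mdeg_def by simp
    qed
    have "J = ?f (restrict J {..<n})" using z by (auto simp: fun_eq_iff not_less)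
    moreover have "restrict J {..<n} \<in> PiE {..<n} (\<lambda>_. {0..d})" using le by auto
    ultimately show "J \<in> ?f ` (PiE {..<n} (\<lambda>_. {0..d}))" by blast
  qed
  moreover have "finite (PiE {..<n} (\<lambda>_. {0..d::nat}))" by (rule finite_PiE) auto
  ultimately show ?thesis using finite_subset by blast
qed

lemma zero_mi[simp]: "(\<lambda>_. 0) \<in> mi n" by (simp add: mi_def)
lemma mdeg_zero[simp]: "mdeg n (\<lambda>_. 0) = 0" by (simp add: mdeg_def)

lemma mdeg0: "J \<in> mi n \<Longrightarrow> mdeg n J = 0 \<Longrightarrow> J = (\<lambda>_. 0)"
  unfolding mi_def mdeg_def
  by (simp add: fun_eq_iff) (metis lessThan_iff not_le)

lemma nz_deg: "J \<in> nzmi n \<Longrightarrow> 1 \<le> mdeg n J"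
  using mdeg0[of J n] unfolding nzmi_def by (cases "mdeg n J") auto

lemma lex_irrefl: "\<not> lex_less n J J" unfolding lex_less_def by auto

lemma mi_less_irrefl: "\<not> mi_less n J J" unfolding mi_less_def using lex_irrefl by auto

lemma lex_trans: "lex_less n J K \<Longrightarrow> lex_less n K L \<Longrightarrow> lex_less n J L"
proof -
  assume "lex_less n J K" "lex_less n K L"
  then obtain i i' where i: "i < n" "\<forall>j<i. J j = K j" "J i < K i"
    and i': "i' < n" "\<forall>j<i'. K j = L j" "K i' < L i'" unfolding lex_less_def by blast
  consider "i < i'" | "i' < i" | "i = i'" by linarith
  then show ?thesis
  proof cases
    case 1 then show ?thesis unfolding lex_less_def using i i' by (intro exI[of _ i]) auto
  next
    case 2 then show ?thesis unfolding lex_less_def using i i' by (intro exI[of _ i']) auto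
  next
    case 3 then show ?thesis unfolding lex_less_def using i i' by (intro exI[of _ i]) auto
  qed
qed

lemma mi_less_trans: "mi_less n J K \<Longrightarrow> mi_less n K L \<Longrightarrow> mi_less n J L"
  unfolding mi_less_def using lex_trans by (metis le_less_trans less_trans order.order_iff_strict)

lemma mi_less_deg: "mi_less n J K \<Longrightarrow> mdeg n J \<le> mdeg n K"
  unfolding mi_less_def by auto

lemma lex_total:
  assumes J: "J \<in> mi n" and K: "K \<in> mi n" and ne: "J \<noteq> K"
  shows "lex_less n J K \<or> lex_less n K J"
proof -
  have ex: "\<exists>i. J i \<noteq> K i" using ne by auto
  define i where "i = (LEAST i. J i \<noteq> K i)"
  have ji: "J i \<noteq> K i" unfolding i_def by (rule LeastI_ex[OF ex])
  have before: "\<forall>j<i. J j = K j" unfolding i_def using not_less_Least by blast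
  have "i < n"
  proof (rule ccontr)
    assume "\<not> i < n"
    then have "J i = 0" "K i = 0" using J K by (auto simp: mi_def)
    then show False using ji by simp
  qed
  then show ?thesis unfolding lex_less_def using ji before
    by (metis linorder_neqE_nat)
qed

lemma mi_less_total:
  "J \<in> mi n \<Longrightarrow> K \<in> mi n \<Longrightarrow> J \<noteq> K \<Longrightarrow> mi_less n J K \<or> mi_less n K J"
  unfolding mi_less_def using lex_total by (metis linorder_neqE_nat)

definition preds :: "nat \<Rightarrow> mindex \<Rightarrow> mindex set" where
  "preds n J = {K \<in> nzmi n. mi_less n K J}"

definition mrank :: "nat \<Rightarrow> mindex \<Rightarrow> nat" where
  "mrank n J = card (preds n J)"

lemma fin_preds: "finite (preds n J)"
proof -
  have "preds n J \<subseteq> {K \<in> mi n. mdeg n K \<le> mdeg n J}"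
    unfolding preds_def nzmi_def using mi_less_deg by auto
  then show ?thesis using fin_deg finite_subset by blast
qed

lemma mrank_less: "K \<in> nzmi n \<Longrightarrow> mi_less n K J \<Longrightarrow> mrank n K < mrank n J"
proof -
  assume K: "K \<in> nzmi n" and l: "mi_less n K J"
  have "preds n K \<subset> preds n J"
  proof
    show "preds n K \<subseteq> preds n J" unfolding preds_def using l mi_less_trans by blast
    have "K \<in> preds n J" "K \<notin> preds n K" using K l mi_less_irrefl unfolding preds_def by auto
    then show "preds n K \<noteq> preds n J" by blast
  qed
  then show ?thesis unfolding mrank_def using fin_preds psubset_card_mono by blast
qed

lemma mrank_inj: "inj_on (mrank n) (nzmi n)"
proof (rule inj_onI, rule ccontr)
  fix J K assume J: "J \<in> nzmi n" and K: "K \<in> nzmi n" and eq: "mrank n J = mrank n K" and ne: "J \<noteq> K"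
  have "mi_less n J K \<or> mi_less n K J" using J K ne mi_less_total unfolding nzmi_def by blast
  then show False using mrank_less J K eq by (metis less_irrefl)
qed

lemma nzmi_infinite: "1 \<le> n \<Longrightarrow> infinite (nzmi n)"
proof
  assume n: "1 \<le> n" and fin: "finite (nzmi n)"
  let ?g = "\<lambda>d::nat. (\<lambda>i::nat. if i = 0 then Suc d else (0::nat))"
  have "?g d \<in> nzmi n" for d
  proof -
    have "?g d \<in> mi n" using n unfolding mi_def by auto
    moreover have "?g d \<noteq> (\<lambda>_. 0)"
    proof
      assume "?g d = (\<lambda>_. 0)"
      from fun_cong[OF this, of 0] show False by simp
    qed
    ultimately show ?thesis unfolding nzmi_def by blast
  qed
  then have "range ?g \<subseteq> nzmi n" by (intro subsetI) auto
  from finite_subset[OF this fin] have "finite (range ?g)" .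
  moreover have "inj ?g"
  proof (rule injI)
    fix x y assume "?g x = ?g y"
    from fun_cong[OF this, of 0] show "x = y" by simp
  qed
  ultimately have "finite (UNIV :: nat set)" by (rule finite_imageD)
  then show False by simp
qed

lemma mrank_descend:
  "J \<in> nzmi n \<Longrightarrow> mrank n J = r + t \<Longrightarrow> \<exists>K\<in>nzmi n. mrank n K = r"
proof (induction t arbitrary: J)
  case 0 then show ?case by auto
next
  case (Suc t)
  have ne: "preds n J \<noteq> {}" using Suc.prems unfolding mrank_def by auto
  define M where "M = Max (mrank n ` preds n J)"
  have "M \<in> mrank n ` preds n J" unfolding M_def using ne fin_preds by simp
  then obtain K where K: "K \<in> preds n J" and KM: "mrank n K = M" by blast
  have maxK: "mrank n K' \<le> mrank n K" if "K' \<in> preds n J" for K'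
    unfolding KM M_def using that fin_preds by simp
  have eqp: "preds n K = preds n J - {K}"
  proof
    show "preds n K \<subseteq> preds n J - {K}"
      using K mi_less_trans mi_less_irrefl unfolding preds_def by blast
    show "preds n J - {K} \<subseteq> preds n K"
    proof
      fix K' assume K': "K' \<in> preds n J - {K}"
      then have "mi_less n K' K \<or> mi_less n K K'"
        using K mi_less_total unfolding preds_def nzmi_def by blast
      moreover have "\<not> mi_less n K K'"
        using mrank_less[of K n K'] maxK[of K'] K K' unfolding preds_def by auto
      ultimately show "K' \<in> preds n K" using K' unfolding preds_def by auto
    qed
  qed
  have "mrank n K = r + t" unfolding mrank_def eqp using K fin_preds Suc.prems(2)
    by (simp add: mrank_def)
  moreover have "K \<in> nzmi n" using K unfolding preds_def by auto
  ultimately show ?case using Suc.IH by blast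
qed

lemma mrank_surj: "1 \<le> n \<Longrightarrow> \<exists>J\<in>nzmi n. mrank n J = r"
proof -
  assume n: "1 \<le> n"
  have "infinite (mrank n ` nzmi n)"
    using nzmi_infinite[OF n] mrank_inj finite_imageD by blast
  then obtain s where s: "s \<in> mrank n ` nzmi n" "r \<le> s"
    using infinite_nat_iff_unbounded_le by blast
  then obtain J where J: "J \<in> nzmi n" "mrank n J = r + (s - r)" by auto
  show ?thesis by (rule mrank_descend[OF J])
qed

lemma enum_props:
  assumes n: "1 \<le> n"
  shows "enum n m \<in> nzmi n \<and> mrank n (enum n m) = m - 1"
proof -
  have ex1: "\<exists>!J. J \<in> nzmi n \<and> mrank n J = m - 1"
  proof -
    obtain J where J: "J \<in> nzmi n" "mrank n J = m - 1" using mrank_surj[OF n] by blast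
    have "J' = J" if "J' \<in> nzmi n \<and> mrank n J' = m - 1" for J'
      using inj_onD[OF mrank_inj[of n], of J' J] that J by simp
    then show ?thesis using J by blast
  qed
  have "enum n m = (THE J. J \<in> nzmi n \<and> mrank n J = m - 1)"
    unfolding enum_def mrank_def preds_def by simp
  then show ?thesis using theI'[OF ex1] by simp
qed

lemma finT: "finite {J \<in> nzmi n. mdeg n J \<le> k}"
  using fin_deg[of n k] by (rule finite_subset[rotated]) (auto simp: nzmi_def)

lemma enum_T:
  fixes k :: nat
  assumes n: "1 \<le> n"
  defines "T \<equiv> {J \<in> nzmi n. mdeg n J \<le> k}"
  defines "N \<equiv> card T"
  shows "\<forall>m\<in>{1..N}. enum n m \<in> T"
    and "\<forall>m>N. enum n m \<in> nzmi n \<and> k < mdeg n (enum n m)"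
    and "inj_on (enum n) {1..N}"
    and "enum n ` {1..N} = T"
proof -
  have fT: "finite T" unfolding T_def by (rule finT)
  have rT: "mrank n J < N" if J: "J \<in> T" for J
  proof -
    have "preds n J \<subseteq> T - {J}"
      using J mi_less_deg mi_less_irrefl unfolding preds_def T_def by force
    then have "card (preds n J) \<le> card (T - {J})" using fT by (intro card_mono) auto
    also have "\<dots> < N" unfolding N_def using fT J by (simp add: card_gt_0_iff) (metis One_nat_def card_gt_0_iff diff_less empty_iff zero_less_one)
    finally show ?thesis unfolding mrank_def .
  qed
  have rnT: "N \<le> mrank n J" if J: "J \<in> nzmi n" "J \<notin> T" for J
  proof -
    have "T \<subseteq> preds n J"
      using J unfolding preds_def T_def mi_less_def by auto
    then show ?thesis unfolding N_def mrank_def using fin_preds by (intro card_mono) auto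
  qed
  show A: "\<forall>m\<in>{1..N}. enum n m \<in> T"
  proof
    fix m assume m: "m \<in> {1..N}"
    have "enum n m \<in> nzmi n" "mrank n (enum n m) = m - 1" using enum_props[OF n] by auto
    then show "enum n m \<in> T" using rnT m by fastforce
  qed
  show "\<forall>m>N. enum n m \<in> nzmi n \<and> k < mdeg n (enum n m)"
  proof (intro allI impI)
    fix m assume m: "N < m"
    have e: "enum n m \<in> nzmi n" "mrank n (enum n m) = m - 1" using enum_props[OF n] by auto
    then have "enum n m \<notin> T" using rT m by fastforce
    then show "enum n m \<in> nzmi n \<and> k < mdeg n (enum n m)" using e unfolding T_def by auto
  qed
  show I: "inj_on (enum n) {1..N}"
  proof (rule inj_onI)
    fix x y assume "x \<in> {1..N}" "y \<in> {1..N}" "enum n x = enum n y"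
    then show "x = y" using enum_props[OF n, of x] enum_props[OF n, of y] by auto
  qed
  have "enum n ` {1..N} \<subseteq> T" using A by auto
  moreover have "card (enum n ` {1..N}) = card T" using card_image[OF I] unfolding N_def by simp
  ultimately show "enum n ` {1..N} = T" using fT card_subset_eq by blast
qed




lemma fps_mult_low:
  fixes f g :: "complex fps"
  assumes f: "\<forall>m<a. fps_nth f m = 0" and g: "\<forall>m<b. fps_nth g m = 0" and m: "m < a + b"
  shows "fps_nth (f * g) m = 0"
  unfolding fps_mult_nth
proof (rule sum.neutral, rule ballI)
  fix i assume im: "i \<in> {0..m}"
  show "fps_nth f i * fps_nth g (m - i) = 0"
  proof (cases "i < a")
    case True then show ?thesis using f by simp
  next
    case False then have "m - i < b" using m im by auto
    then show ?thesis using g by simp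
  qed
qed

lemma fps_pow_low:
  fixes f :: "complex fps"
  assumes f: "\<forall>m<a. fps_nth f m = 0"
  shows "\<forall>m < a * e. fps_nth (f ^ e) m = 0"
proof (induction e)
  case 0 then show ?case by simp
next
  case (Suc e)
  show ?case
  proof (intro allI impI)
    fix m assume "m < a * Suc e"
    then have "m < a + a * e" by simp
    then show "fps_nth (f ^ Suc e) m = 0" using fps_mult_low[OF f Suc.IH] by simp
  qed
qed

lemma fps_prod_low:
  fixes f :: "nat \<Rightarrow> complex fps"
  assumes fin: "finite S"
  shows "(\<forall>i\<in>S. \<forall>m<a i. fps_nth (f i) m = 0) \<Longrightarrow> \<forall>m < (\<Sum>i\<in>S. a i). fps_nth (\<Prod>i\<in>S. f i) m = 0"
  using fin
proof (induction S rule: finite_induct)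
  case empty then show ?case by simp
next
  case (insert x F)
  show ?case
  proof (intro allI impI)
    fix m assume m: "m < (\<Sum>i\<in>insert x F. a i)"
    have "(\<Prod>i\<in>insert x F. f i) = f x * (\<Prod>i\<in>F. f i)" using insert by simp
    moreover have "m < a x + (\<Sum>i\<in>F. a i)" using m insert by simp
    ultimately show "fps_nth (\<Prod>i\<in>insert x F. f i) m = 0"
      using fps_mult_low[of "a x" "f x" "\<Sum>i\<in>F. a i" "\<Prod>i\<in>F. f i" m] insert by simp
  qed
qed

lemma zpow_low:
  assumes z: "\<forall>i<n. \<forall>m<\<nu>. fps_nth (\<zeta> i) m = 0" and p: "p < \<nu> * mdeg n J"
  shows "fps_nth (zpow n \<zeta> J) p = 0"
proof -
  have "\<forall>i\<in>{..<n}. \<forall>m<\<nu> * J i. fps_nth (\<zeta> i ^ J i) m = 0"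
  proof (intro ballI allI impI)
    fix i m assume i: "i \<in> {..<n}" and m: "m < \<nu> * J i"
    show "fps_nth (\<zeta> i ^ J i) m = 0" using fps_pow_low[of \<nu> "\<zeta> i" "J i"] z i m by auto
  qed
  from fps_prod_low[OF _ this] have "\<forall>m<(\<Sum>i<n. \<nu> * J i). fps_nth (zpow n \<zeta> J) m = 0"
    unfolding zpow_def by simp
  moreover have "(\<Sum>i<n. \<nu> * J i) = \<nu> * mdeg n J" unfolding mdeg_def by (simp add: sum_distrib_left)
  ultimately show ?thesis using p by simp
qed

lemma zpow_zero[simp]: "zpow n \<zeta> (\<lambda>_. 0) = 1" unfolding zpow_def by simp

lemma nu_props:
  assumes z0: "\<forall>i<n. fps_nth (\<zeta> i) 0 = 0" and nc: "\<exists>i<n. \<zeta> i \<noteq> 0"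
  shows "1 \<le> nu n \<zeta>" and "\<forall>i<n. \<forall>m<nu n \<zeta>. fps_nth (\<zeta> i) m = 0"
proof -
  from nc obtain i where i: "i < n" "\<zeta> i \<noteq> 0" by blast
  then obtain m where "fps_nth (\<zeta> i) m \<noteq> 0" by (metis fps_ext fps_zero_nth)
  then have ex: "\<exists>m. \<exists>i<n. fps_nth (\<zeta> i) m \<noteq> 0" using i by blast
  have "\<exists>i<n. fps_nth (\<zeta> i) (nu n \<zeta>) \<noteq> 0" unfolding nu_def by (rule LeastI_ex[OF ex])
  then show "1 \<le> nu n \<zeta>" using z0 by (cases "nu n \<zeta>") auto
  show "\<forall>i<n. \<forall>m<nu n \<zeta>. fps_nth (\<zeta> i) m = 0" unfolding nu_def using not_less_Least by blast
qed

definition extm :: "nat \<Rightarrow> (nat \<Rightarrow> nat \<Rightarrow> complex) \<Rightarrow> nat \<Rightarrow> nat \<Rightarrow> complex" where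
  "extm N A i j = (if i \<in> {1..N} \<and> j \<in> {1..N} then A i j else (if i = j then 1 else 0))"

lemma adj_ext: "adj (extm N A) = extm N (adj A)"
  unfolding adj_def extm_def by (auto simp: fun_eq_iff)

lemma matvec_in:
  assumes i: "i \<in> {1..N}"
  shows "(\<Sum>\<^sub>\<infinity>m\<in>{1..}. extm N A i m * v m) = (\<Sum>m\<in>{1..N}. A i m * v m)"
proof -
  have "(\<Sum>\<^sub>\<infinity>m\<in>{1..}. extm N A i m * v m) = (\<Sum>\<^sub>\<infinity>m\<in>{1..N}. A i m * v m)"
    by (rule infsum_cong_neutral) (use i in \<open>auto simp: extm_def\<close>)
  then show ?thesis by simp
qed

lemma matvec_out:
  assumes i: "i \<ge> 1" "i \<notin> {1..N}"
  shows "(\<Sum>\<^sub>\<infinity>m\<in>{1..}. extm N A i m * v m) = v i"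
proof -
  have "(\<Sum>\<^sub>\<infinity>m\<in>{1..}. extm N A i m * v m) = (\<Sum>\<^sub>\<infinity>m\<in>{i}. v m)"
    by (rule infsum_cong_neutral) (use i in \<open>auto simp: extm_def\<close>)
  then show ?thesis by simp
qed

lemma ext_sums:
  assumes A: "\<forall>i\<in>{1..N}. \<forall>l\<in>{1..N}. (\<Sum>k\<in>{1..N}. A i k * cnj (A l k)) = (if i = l then 1 else 0)"
    and i: "1 \<le> i" and l: "1 \<le> l"
  shows "prod_entry_sums (extm N A) (adj (extm N A)) i l (if i = l then 1 else 0)"
proof -
  define M where "M = max N (max i l)"
  define f where "f j = extm N A i j * cnj (extm N A l j)" for j
  have "(\<lambda>k. f (Suc k)) sums (\<Sum>k\<in>{..<M}. f (Suc k))"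
    by (rule sums_finite) (auto simp: f_def extm_def M_def)
  moreover have "(\<Sum>k\<in>{..<M}. f (Suc k)) = (\<Sum>j\<in>{1..M}. f j)"
    by (simp add: sum.atLeast1_atMost_eq)
  moreover have "{1..M} = {1..N} \<union> {N<..M}" unfolding M_def by auto
  moreover have split: "(\<Sum>j\<in>{1..N} \<union> {N<..M}. f j) = (\<Sum>j\<in>{1..N}. f j) + (\<Sum>j\<in>{N<..M}. f j)"
    by (rule sum.union_disjoint) auto
  moreover have "(\<Sum>j\<in>{1..N}. f j) + (\<Sum>j\<in>{N<..M}. f j) = (if i = l then 1 else 0)"
  proof (cases "i \<in> {1..N}")
    case True
    have z2: "(\<Sum>j\<in>{N<..M}. f j) = 0"
      by (rule sum.neutral) (use True in \<open>auto simp: f_def extm_def\<close>)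
    show ?thesis
    proof (cases "l \<in> {1..N}")
      case True2: True
      have "(\<Sum>j\<in>{1..N}. f j) = (\<Sum>k\<in>{1..N}. A i k * cnj (A l k))"
        by (rule sum.cong) (use True True2 in \<open>auto simp: f_def extm_def\<close>)
      then show ?thesis using A True True2 z2 by simp
    next
      case False
      have "(\<Sum>j\<in>{1..N}. f j) = 0"
        by (rule sum.neutral) (use True False in \<open>auto simp: f_def extm_def\<close>)
      then show ?thesis using z2 True False by auto
    qed
  next
    case False
    have z1: "(\<Sum>j\<in>{1..N}. f j) = 0"
      by (rule sum.neutral) (use False in \<open>auto simp: f_def extm_def\<close>)
    have iin: "i \<in> {N<..M}" using False i unfolding M_def by auto
    have "(\<Sum>j\<in>{N<..M}. f j) = (\<Sum>j\<in>{N<..M}. if j = i then cnj (extm N A l i) else 0)"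
      by (rule sum.cong) (use False in \<open>auto simp: f_def extm_def\<close>)
    also have "\<dots> = cnj (extm N A l i)" using iin by simp
    also have "\<dots> = (if i = l then 1 else 0)" using False by (auto simp: extm_def)
    finally show ?thesis using z1 by simp
  qed
  ultimately show ?thesis unfolding prod_entry_sums_def f_def adj_def by simp
qed

lemma ext_M1N:
  assumes U: "unitI {1..N} A"
  shows "extm N A \<in> M1N N"
proof -
  have A1: "\<forall>i\<in>{1..N}. \<forall>l\<in>{1..N}. (\<Sum>k\<in>{1..N}. A i k * cnj (A l k)) = (if i = l then 1 else 0)"
    using U unfolding unitI_def by blast
  have A2: "\<forall>i\<in>{1..N}. \<forall>l\<in>{1..N}. (\<Sum>k\<in>{1..N}. adj A i k * cnj (adj A l k)) = (if i = l then 1 else 0)"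
    using U unfolding unitI_def adj_def by simp
  have "extm N A \<in> M1"
    unfolding M1_def
  proof (intro CollectI allI impI conjI)
    fix i l :: nat assume "1 \<le> i" "1 \<le> l"
    show "prod_entry_sums (extm N A) (adj (extm N A)) i l (if i = l then 1 else 0)"
      by (rule ext_sums[OF A1]) fact+
    have "prod_entry_sums (extm N (adj A)) (adj (extm N (adj A))) i l (if i = l then 1 else 0)"
      by (rule ext_sums[OF A2]) fact+
    moreover have "adj (adj A) = A" by (simp add: adj_def fun_eq_iff)
    ultimately show "prod_entry_sums (adj (extm N A)) (extm N A) i l (if i = l then 1 else 0)"
      by (simp add: adj_ext)
  qed
  then show ?thesis unfolding M1N_def by (auto simp: extm_def)
qed




lemma pb_hol_ext:
  assumes low: "\<And>J p. p < mdeg n J \<Longrightarrow> fps_nth (zpow n \<zeta> J) p = 0" and p: "p \<le> B"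
  shows "pb_hol n \<zeta> s p = (\<Sum>K\<in>{K \<in> mi n. mdeg n K \<le> B}. s K * fps_nth (zpow n \<zeta> K) p)"
  unfolding pb_hol_def
proof (rule sum.mono_neutral_left)
  show "finite {K \<in> mi n. mdeg n K \<le> B}" by (rule fin_deg)
  show "{J \<in> mi n. mdeg n J \<le> p} \<subseteq> {K \<in> mi n. mdeg n K \<le> B}" using p by auto
  have low': "\<And>J. fps_nth (zpow n \<zeta> J) p \<noteq> 0 \<Longrightarrow> mdeg n J \<le> p" using low by (meson not_le)
  show "\<forall>i\<in>{K \<in> mi n. mdeg n K \<le> B} - {J \<in> mi n. mdeg n J \<le> p}. s i * fps_nth (zpow n \<zeta> i) p = 0"
    using low' by auto
qed

lemma pb_bi_ext:
  assumes low: "\<And>J p. p < mdeg n J \<Longrightarrow> fps_nth (zpow n \<zeta> J) p = 0" and p: "p \<le> B" and q: "q \<le> B"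
  shows "pb_bi n \<zeta> \<phi> p q = (\<Sum>J\<in>{K \<in> mi n. mdeg n K \<le> B}. \<Sum>K\<in>{K \<in> mi n. mdeg n K \<le> B}.
           \<phi> J K * fps_nth (zpow n \<zeta> J) p * cnj (fps_nth (zpow n \<zeta> K) q))"
proof -
  let ?SB = "{K \<in> mi n. mdeg n K \<le> B}"
  let ?Z = "\<lambda>J p. fps_nth (zpow n \<zeta> J) p"
  have low': "\<And>J p. fps_nth (zpow n \<zeta> J) p \<noteq> 0 \<Longrightarrow> mdeg n J \<le> p" using low by (meson not_le)
  have inner: "(\<Sum>K\<in>{K \<in> mi n. mdeg n K \<le> q}. \<phi> J K * ?Z J p * cnj (?Z K q)) =
      (\<Sum>K\<in>?SB. \<phi> J K * ?Z J p * cnj (?Z K q))" for J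
    by (rule sum.mono_neutral_left) (use fin_deg q low' in auto)
  have "pb_bi n \<zeta> \<phi> p q = (\<Sum>J\<in>{J \<in> mi n. mdeg n J \<le> p}. \<Sum>K\<in>?SB. \<phi> J K * ?Z J p * cnj (?Z K q))"
    unfolding pb_bi_def inner ..
  also have "\<dots> = (\<Sum>J\<in>?SB. \<Sum>K\<in>?SB. \<phi> J K * ?Z J p * cnj (?Z K q))"
  proof (rule sum.mono_neutral_left)
    show "finite ?SB" by (rule fin_deg)
    show "{J \<in> mi n. mdeg n J \<le> p} \<subseteq> ?SB" using p by auto
    show "\<forall>i\<in>?SB - {J \<in> mi n. mdeg n J \<le> p}. (\<Sum>K\<in>?SB. \<phi> i K * ?Z i p * cnj (?Z K q)) = 0"
    proof
      fix i assume "i \<in> ?SB - {J \<in> mi n. mdeg n J \<le> p}"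
      then have "p < mdeg n i" by auto
      then have "?Z i p = 0" by (rule low)
      then show "(\<Sum>K\<in>?SB. \<phi> i K * ?Z i p * cnj (?Z K q)) = 0" by simp
    qed
  qed
  finally show ?thesis .
qed

lemma pb_hol_lin:
  assumes fin: "finite I"
  shows "pb_hol n \<zeta> (\<lambda>K. s K - (\<Sum>j\<in>I. c j * t j K)) p = pb_hol n \<zeta> s p - (\<Sum>j\<in>I. c j * pb_hol n \<zeta> (t j) p)"
proof -
  let ?S = "{J \<in> mi n. mdeg n J \<le> p}"
  let ?Z = "\<lambda>J. fps_nth (zpow n \<zeta> J) p"
  have "pb_hol n \<zeta> (\<lambda>K. s K - (\<Sum>j\<in>I. c j * t j K)) p =
      (\<Sum>J\<in>?S. s J * ?Z J - (\<Sum>j\<in>I. c j * (t j J * ?Z J)))"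
    unfolding pb_hol_def by (rule sum.cong[OF refl]) (simp add: right_diff_distrib sum_distrib_left mult_ac)
  also have "\<dots> = (\<Sum>J\<in>?S. s J * ?Z J) - (\<Sum>J\<in>?S. \<Sum>j\<in>I. c j * (t j J * ?Z J))"
    by (rule sum_subtractf)
  also have "(\<Sum>J\<in>?S. \<Sum>j\<in>I. c j * (t j J * ?Z J)) = (\<Sum>j\<in>I. \<Sum>J\<in>?S. c j * (t j J * ?Z J))"
    by (rule sum.swap)
  also have "\<dots> = (\<Sum>j\<in>I. c j * pb_hol n \<zeta> (t j) p)"
    unfolding pb_hol_def by (simp add: sum_distrib_left)
  finally show ?thesis unfolding pb_hol_def by simp
qed

lemma pb_hol_diff:
  "pb_hol n \<zeta> (\<lambda>K. s K - t K) p = pb_hol n \<zeta> s p - pb_hol n \<zeta> t p"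
  unfolding pb_hol_def by (simp add: left_diff_distrib sum_subtractf)

lemma aser_cnj_fser:
  assumes J: "J \<noteq> (\<lambda>_. 0)"
  shows "fser n a J K = (if K = J then 1 else 0) + cnj (aser n a J K)"
    and "gser n a J K = (if K = J then 1 else 0) - cnj (aser n a J K)"
  using J unfolding fser_def gser_def aser_def by auto

lemma model_nz:
  assumes "J \<noteq> (\<lambda>_. 0)" "K \<noteq> (\<lambda>_. 0)"
  shows "model n h a J K = 2 * (aser n a J K + cnj (aser n a K J))"
  using assms unfolding model_def re_bi_def conj_bi_def hol_bi_def by simp

lemma model_0:
  assumes "h (\<lambda>_. 0) = 0"
  shows "model n h a J (\<lambda>_. 0) = h J"
  using assms unfolding model_def re_bi_def conj_bi_def hol_bi_def aser_def by auto

theorem mainTheorem3: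
  fixes n :: nat
    and c :: biser
    and h :: holser
    and a :: "mindex \<Rightarrow> mindex \<Rightarrow> complex"
    and \<zeta> :: "nat \<Rightarrow> complex fps"
    and k :: nat
  assumes r_real: "\<forall>J\<in>mi n. \<forall>K\<in>mi n. c K J = cnj (c J K)"
    and r_0: "c (\<lambda>_. 0) (\<lambda>_. 0) = 0"
    and dr_0: "\<exists>J\<in>mi n. mdeg n J = 1 \<and> c J (\<lambda>_. 0) \<noteq> 0"
    and h_0: "h (\<lambda>_. 0) = 0"
    and expansion: "\<forall>J\<in>mi n. \<forall>K\<in>mi n. c J K = model n h a J K"
    and zeta_0: "\<forall>i<n. fps_nth (\<zeta> i) 0 = 0"
    and zeta_nonconst: "\<exists>i<n. \<zeta> i \<noteq> 0"
    and k_pos: "k \<ge> 1"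
    and jet_r: "jet_bi_zero (2 * k * nu n \<zeta>) (pb_bi n \<zeta> c)"
  shows "\<exists>N. \<exists>U \<in> M1N N.
           jet_hol_zero (2 * k * nu n \<zeta>) (pb_hol n \<zeta> h) \<and>
           (\<forall>m\<ge>1. jet_hol_zero (k * nu n \<zeta>)
                     (pb_hol n \<zeta> (\<lambda>K. fvec n a m K - matvec U (gvec n a) m K)))"
proof -
  obtain J0 where J0: "J0 \<in> mi n" "mdeg n J0 = 1" using dr_0 by blast
  have n1: "1 \<le> n"
  proof (rule ccontr)
    assume "\<not> 1 \<le> n"
    then have "n = 0" by simp
    then have "mdeg n J0 = 0" by (simp add: mdeg_def)
    with J0 show False by simp
  qed
  define \<nu> where "\<nu> = nu n \<zeta>"
  have nu1: "1 \<le> \<nu>" and zl: "\<forall>i<n. \<forall>m<\<nu>. fps_nth (\<zeta> i) m = 0"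
    using nu_props[OF zeta_0 zeta_nonconst] unfolding \<nu>_def by auto
  define Z where "Z J p = fps_nth (zpow n \<zeta> J) p" for J p
  have Zl: "\<And>J p. p < \<nu> * mdeg n J \<Longrightarrow> Z J p = 0" unfolding Z_def by (rule zpow_low[OF zl])
  have Zl1: "\<And>J p. p < mdeg n J \<Longrightarrow> fps_nth (zpow n \<zeta> J) p = 0"
  proof -
    fix J p assume "p < mdeg n J"
    moreover have "mdeg n J \<le> \<nu> * mdeg n J" using nu1 by simp
    ultimately show "fps_nth (zpow n \<zeta> J) p = 0" using Zl unfolding Z_def by (meson less_le_trans)
  qed
  define D where "D = k * \<nu>"
  define B where "B = 2 * k * \<nu>"
  have BD: "B = D + D" unfolding B_def D_def by simp
  define SB where "SB = {J \<in> mi n. mdeg n J \<le> B}"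
  have finSB: "finite SB" unfolding SB_def by (rule fin_deg)
  have exth: "\<And>s p. p \<le> B \<Longrightarrow> pb_hol n \<zeta> s p = (\<Sum>K\<in>SB. s K * Z K p)"
    unfolding SB_def Z_def by (rule pb_hol_ext[OF Zl1])
  have extb: "\<And>\<phi> p q. p \<le> B \<Longrightarrow> q \<le> B \<Longrightarrow> pb_bi n \<zeta> \<phi> p q = (\<Sum>J\<in>SB. \<Sum>K\<in>SB. \<phi> J K * Z J p * cnj (Z K q))"
    unfolding SB_def Z_def by (rule pb_bi_ext[OF Zl1])
  have Z0: "\<And>p. 1 \<le> p \<Longrightarrow> Z (\<lambda>_. 0) p = 0" unfolding Z_def by simp

  have hjet: "jet_hol_zero (2 * k * nu n \<zeta>) (pb_hol n \<zeta> h)"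
  proof -
    have "pb_hol n \<zeta> h p = 0" if p: "p \<le> B" for p
    proof -
      have K0: "{K \<in> mi n. mdeg n K \<le> 0} = {\<lambda>_. 0}" using mdeg0 by auto
      have "pb_bi n \<zeta> c p 0 = (\<Sum>J\<in>{J \<in> mi n. mdeg n J \<le> p}. c J (\<lambda>_. 0) * fps_nth (zpow n \<zeta> J) p)"
        unfolding pb_bi_def K0 by simp
      also have "\<dots> = pb_hol n \<zeta> h p" unfolding pb_hol_def
        by (rule sum.cong[OF refl]) (use expansion model_0[of h, OF h_0] in auto)
      finally show ?thesis using jet_r p unfolding jet_bi_zero_def B_def \<nu>_def by auto
    qed
    then show ?thesis unfolding jet_hol_zero_def B_def \<nu>_def by auto
  qed

  define Fc where "Fc J p = pb_hol n \<zeta> (fser n a J) p" for J p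
  define Gc where "Gc J p = pb_hol n \<zeta> (gser n a J) p" for J p
  have E1: "\<And>J p. J \<in> nzmi n \<Longrightarrow> p < \<nu> * mdeg n J \<Longrightarrow> Fc J p = 0 \<and> Gc J p = 0"
  proof -
    fix J p assume J: "J \<in> nzmi n" and p: "p < \<nu> * mdeg n J"
    have t: "Z K p = 0" if "K = J \<or> mi_le n J K" for K
    proof -
      have "mdeg n J \<le> mdeg n K" using that mi_less_deg unfolding mi_le_def by auto
      then have "\<nu> * mdeg n J \<le> \<nu> * mdeg n K" by (rule mult_le_mono2)
      then have "p < \<nu> * mdeg n K" using p by linarith
      then show ?thesis by (rule Zl)
    qed
    have f: "fser n a J K * fps_nth (zpow n \<zeta> K) p = 0" for K using t[of K] unfolding fser_def Z_def by auto
    have g: "gser n a J K * fps_nth (zpow n \<zeta> K) p = 0" for K using t[of K] unfolding gser_def Z_def by auto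
    have "Fc J p = 0" unfolding Fc_def pb_hol_def by (rule sum.neutral) (use f in blast)
    moreover have "Gc J p = 0" unfolding Gc_def pb_hol_def by (rule sum.neutral) (use g in blast)
    ultimately show "Fc J p = 0 \<and> Gc J p = 0" by blast
  qed

  have decomp: "\<And>J p. J \<in> nzmi n \<Longrightarrow> mdeg n J \<le> B \<Longrightarrow> p \<le> B \<Longrightarrow>
       Fc J p = Z J p + (\<Sum>K\<in>SB. cnj (aser n a J K) * Z K p) \<and>
       Gc J p = Z J p - (\<Sum>K\<in>SB. cnj (aser n a J K) * Z K p)"
  proof -
    fix J p assume J: "J \<in> nzmi n" and JB: "mdeg n J \<le> B" and p: "p \<le> B"
    have Jz: "J \<noteq> (\<lambda>_. 0)" and JS: "J \<in> SB" using J JB unfolding nzmi_def SB_def by auto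
    have "Fc J p = (\<Sum>K\<in>SB. (if K = J then Z K p else 0) + cnj (aser n a J K) * Z K p)"
      unfolding Fc_def exth[OF p] by (rule sum.cong[OF refl]) (simp add: aser_cnj_fser[OF Jz] distrib_right)
    also have "\<dots> = Z J p + (\<Sum>K\<in>SB. cnj (aser n a J K) * Z K p)" using JS finSB by (simp add: sum.distrib)
    finally have F: "Fc J p = Z J p + (\<Sum>K\<in>SB. cnj (aser n a J K) * Z K p)" .
    have "Gc J p = (\<Sum>K\<in>SB. (if K = J then Z K p else 0) - cnj (aser n a J K) * Z K p)"
      unfolding Gc_def exth[OF p] by (rule sum.cong[OF refl]) (simp add: aser_cnj_fser[OF Jz] left_diff_distrib)
    also have "\<dots> = Z J p - (\<Sum>K\<in>SB. cnj (aser n a J K) * Z K p)" using JS finSB by (simp add: sum_subtractf)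
    finally show "?thesis J p" using F by simp
  qed

  have ident: "\<And>p q. 1 \<le> p \<Longrightarrow> 1 \<le> q \<Longrightarrow> p \<le> B \<Longrightarrow> q \<le> B \<Longrightarrow>
     (\<Sum>J\<in>SB - {\<lambda>_. 0}. Fc J p * cnj (Fc J q) - Gc J p * cnj (Gc J q)) = pb_bi n \<zeta> c p q"
  proof -
    fix p q assume p1: "1 \<le> p" and q1: "1 \<le> q" and pB: "p \<le> B" and qB: "q \<le> B"
    define X where "X J = (\<Sum>K\<in>SB. aser n a J K * Z J p * cnj (Z K q)) +
        (\<Sum>K\<in>SB. cnj (aser n a J K) * Z K p * cnj (Z J q))" for J
    have L1: "Fc J p * cnj (Fc J q) - Gc J p * cnj (Gc J q) = 2 * X J" if J: "J \<in> SB - {\<lambda>_. 0}" for J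
    proof -
      have Jn: "J \<in> nzmi n" "mdeg n J \<le> B" using J unfolding SB_def nzmi_def by auto
      define A where "A = (\<Sum>K\<in>SB. cnj (aser n a J K) * Z K p)"
      define A' where "A' = (\<Sum>K\<in>SB. cnj (aser n a J K) * Z K q)"
      have Fp: "Fc J p = Z J p + A" "Gc J p = Z J p - A" using decomp[OF Jn pB] unfolding A_def by auto
      have Fq: "Fc J q = Z J q + A'" "Gc J q = Z J q - A'" using decomp[OF Jn qB] unfolding A'_def by auto
      have e1: "(Z J p + A) * (cnj (Z J q) + cnj A') - (Z J p - A) * (cnj (Z J q) - cnj A')
          = 2 * (Z J p * cnj A' + A * cnj (Z J q))" by (simp add: algebra_simps)
      have e2: "Z J p * cnj A' = (\<Sum>K\<in>SB. aser n a J K * Z J p * cnj (Z K q))"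
        unfolding A'_def by (simp add: sum_distrib_left mult_ac)
      have e3: "A * cnj (Z J q) = (\<Sum>K\<in>SB. cnj (aser n a J K) * Z K p * cnj (Z J q))"
        unfolding A_def by (simp add: sum_distrib_right sum_distrib_left mult_ac)
      show ?thesis unfolding Fp Fq complex_cnj_add complex_cnj_diff e1 e2 e3 X_def ..
    qed
    have "(\<Sum>J\<in>SB - {\<lambda>_. 0}. Fc J p * cnj (Fc J q) - Gc J p * cnj (Gc J q)) = (\<Sum>J\<in>SB - {\<lambda>_. 0}. 2 * X J)"
      using L1 by (rule sum.cong[OF refl])
    also have "\<dots> = (\<Sum>J\<in>SB. 2 * X J)"
      by (rule sum.mono_neutral_left) (auto simp: X_def aser_def finSB)
    also have "\<dots> = 2 * (\<Sum>J\<in>SB. \<Sum>K\<in>SB. aser n a J K * Z J p * cnj (Z K q)) +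
        2 * (\<Sum>J\<in>SB. \<Sum>K\<in>SB. cnj (aser n a J K) * Z K p * cnj (Z J q))"
      unfolding X_def by (simp add: sum.distrib sum_distrib_left)
    also have "(\<Sum>J\<in>SB. \<Sum>K\<in>SB. cnj (aser n a J K) * Z K p * cnj (Z J q)) =
        (\<Sum>J\<in>SB. \<Sum>K\<in>SB. cnj (aser n a K J) * Z J p * cnj (Z K q))"
      by (rule sum.swap)
    also have "2 * (\<Sum>J\<in>SB. \<Sum>K\<in>SB. aser n a J K * Z J p * cnj (Z K q)) +
        2 * (\<Sum>J\<in>SB. \<Sum>K\<in>SB. cnj (aser n a K J) * Z J p * cnj (Z K q)) =
        (\<Sum>J\<in>SB. \<Sum>K\<in>SB. 2 * (aser n a J K + cnj (aser n a K J)) * Z J p * cnj (Z K q))"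
      by (simp add: sum.distrib sum_distrib_left algebra_simps)
    also have "\<dots> = (\<Sum>J\<in>SB. \<Sum>K\<in>SB. c J K * Z J p * cnj (Z K q))"
    proof (intro sum.cong refl)
      fix J K assume J: "J \<in> SB" and K: "K \<in> SB"
      show "2 * (aser n a J K + cnj (aser n a K J)) * Z J p * cnj (Z K q) = c J K * Z J p * cnj (Z K q)"
      proof (cases "J = (\<lambda>_. 0) \<or> K = (\<lambda>_. 0)")
        case True then show ?thesis using Z0 p1 q1 by auto
      next
        case False
        then have "c J K = 2 * (aser n a J K + cnj (aser n a K J))"
          using expansion J K model_nz unfolding SB_def by auto
        then show ?thesis by simp
      qed
    qed
    also have "\<dots> = pb_bi n \<zeta> c p q" using extb[OF pB qB] by simp
    finally show "?thesis p q" .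
  qed
  define T where "T = {J \<in> nzmi n. mdeg n J \<le> k}"
  define N where "N = card T"
  have eT1: "\<forall>m\<in>{1..N}. enum n m \<in> T" and eT2: "\<forall>m>N. enum n m \<in> nzmi n \<and> k < mdeg n (enum n m)"
    and eT3: "inj_on (enum n) {1..N}" and eT4: "enum n ` {1..N} = T"
    using enum_T[OF n1, of k] unfolding T_def N_def by auto
  have kB: "k \<le> B" unfolding B_def using nu1 by (simp add: mult.commute)
  have bigdeg: "D < \<nu> * mdeg n J" if "k < mdeg n J" for J
  proof -
    have "\<nu> * Suc k \<le> \<nu> * mdeg n J" using that by (intro mult_le_mono2) simp
    then show ?thesis unfolding D_def using nu1 that by (simp add: mult.commute)
  qed
  have gramT: "(\<Sum>J\<in>T. Fc J p * cnj (Fc J q)) = (\<Sum>J\<in>T. Gc J p * cnj (Gc J q))"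
    if pD: "p \<le> D" and qD: "q \<le> D" for p q
  proof (cases "p = 0 \<or> q = 0")
    case True
    have z: "Fc J 0 = 0 \<and> Gc J 0 = 0" if J: "J \<in> T" for J
    proof -
      have "1 \<le> mdeg n J" using J nz_deg unfolding T_def by auto
      then have "0 < \<nu> * mdeg n J" using nu1 by simp
      then show ?thesis using E1 J unfolding T_def by auto
    qed
    show ?thesis
    proof (rule sum.cong[OF refl])
      fix J assume "J \<in> T"
      then show "Fc J p * cnj (Fc J q) = Gc J p * cnj (Gc J q)" using z True by auto
    qed
  next
    case False
    then have p1: "1 \<le> p" and q1: "1 \<le> q" by auto
    have pB: "p \<le> B" and qB: "q \<le> B" using pD qD BD by auto
    have "pb_bi n \<zeta> c p q = 0" using jet_r pD qD BD unfolding jet_bi_zero_def B_def \<nu>_def by auto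
    then have S0: "(\<Sum>J\<in>SB - {\<lambda>_. 0}. Fc J p * cnj (Fc J q) - Gc J p * cnj (Gc J q)) = 0"
      using ident[OF p1 q1 pB qB] by simp
    have TS: "T \<subseteq> SB - {\<lambda>_. 0}" using kB unfolding T_def SB_def nzmi_def by auto
    have "(\<Sum>J\<in>T. Fc J p * cnj (Fc J q) - Gc J p * cnj (Gc J q)) =
        (\<Sum>J\<in>SB - {\<lambda>_. 0}. Fc J p * cnj (Fc J q) - Gc J p * cnj (Gc J q))"
    proof (rule sum.mono_neutral_left)
      show "finite (SB - {\<lambda>_. 0})" using finSB by simp
      show "T \<subseteq> SB - {\<lambda>_. 0}" by (rule TS)
      show "\<forall>J\<in>SB - {\<lambda>_. 0} - T. Fc J p * cnj (Fc J q) - Gc J p * cnj (Gc J q) = 0"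
      proof
        fix J assume J: "J \<in> SB - {\<lambda>_. 0} - T"
        then have Jn: "J \<in> nzmi n" and Jk: "k < mdeg n J" unfolding SB_def T_def nzmi_def by auto
        have "p < \<nu> * mdeg n J" using bigdeg[OF Jk] pD by simp
        then show "Fc J p * cnj (Fc J q) - Gc J p * cnj (Gc J q) = 0" using E1[OF Jn] by simp
      qed
    qed
    then have "(\<Sum>J\<in>T. Fc J p * cnj (Fc J q) - Gc J p * cnj (Gc J q)) = 0" using S0 by simp
    then show ?thesis by (simp add: sum_subtractf)
  qed
  define I where "I = {1..N}"
  define u where "u p i = Fc (enum n i) p" for p i
  define w where "w p i = Gc (enum n i) p" for p i
  have finI: "finite I" unfolding I_def by simp
  have reidx: "(\<Sum>i\<in>I. g (enum n i)) = (\<Sum>J\<in>T. g J)" for g :: "mindex \<Rightarrow> complex"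
    unfolding I_def using sum.reindex[OF eT3, of g] eT4 by simp
  have gramI: "\<forall>p<Suc D. \<forall>q<Suc D. ipI I (u p) (u q) = ipI I (w p) (w q)"
  proof (intro allI impI)
    fix p q assume p: "p < Suc D" and q: "q < Suc D"
    have "ipI I (u p) (u q) = (\<Sum>J\<in>T. Fc J p * cnj (Fc J q))"
      unfolding ipI_def u_def using reidx[of "\<lambda>J. Fc J p * cnj (Fc J q)"] by simp
    also have "\<dots> = (\<Sum>J\<in>T. Gc J p * cnj (Gc J q))" using gramT p q by simp
    also have "\<dots> = ipI I (w p) (w q)"
      unfolding ipI_def w_def using reidx[of "\<lambda>J. Gc J p * cnj (Gc J q)"] by simp
    finally show "ipI I (u p) (u q) = ipI I (w p) (w q)" .
  qed
  obtain A where A: "unitI I A" and Aw: "\<forall>p<Suc D. \<forall>i\<in>I. mvI I A (w p) i = u p i"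
    using gram_unitary[OF finI gramI] by blast
  define U where "U = extm N A"
  have UM: "U \<in> M1N N" unfolding U_def by (rule ext_M1N) (use A in \<open>simp add: I_def\<close>)
  have fin_part: "\<forall>m\<ge>1. jet_hol_zero (k * nu n \<zeta>)
                     (pb_hol n \<zeta> (\<lambda>K. fvec n a m K - matvec U (gvec n a) m K))"
  proof (intro allI impI)
    fix m :: nat assume m1: "1 \<le> m"
    show "jet_hol_zero (k * nu n \<zeta>) (pb_hol n \<zeta> (\<lambda>K. fvec n a m K - matvec U (gvec n a) m K))"
      unfolding jet_hol_zero_def
    proof (intro allI impI)
      fix p assume p: "p \<le> k * nu n \<zeta>"
      then have pD: "p \<le> D" unfolding D_def \<nu>_def .
      show "pb_hol n \<zeta> (\<lambda>K. fvec n a m K - matvec U (gvec n a) m K) p = 0"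
      proof (cases "m \<in> I")
        case True
        have mv: "matvec U (gvec n a) m K = (\<Sum>j\<in>I. A m j * gvec n a j K)" for K
          unfolding matvec_def U_def I_def using matvec_in[of m N A "\<lambda>j. gvec n a j K"] True
          unfolding I_def by simp
        have "pb_hol n \<zeta> (\<lambda>K. fvec n a m K - matvec U (gvec n a) m K) p =
            pb_hol n \<zeta> (\<lambda>K. fvec n a m K - (\<Sum>j\<in>I. A m j * gvec n a j K)) p"
          by (simp only: mv)
        also have "\<dots> = pb_hol n \<zeta> (fvec n a m) p - (\<Sum>j\<in>I. A m j * pb_hol n \<zeta> (gvec n a j) p)"
          by (rule pb_hol_lin[OF finI])
        also have "\<dots> = u p m - mvI I A (w p) m"
          unfolding u_def w_def mvI_def Fc_def Gc_def fvec_def gvec_def ..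
        also have "\<dots> = 0" using Aw pD True by auto
        finally show ?thesis .
      next
        case False
        then have mN: "N < m" using m1 unfolding I_def by auto
        have mv: "matvec U (gvec n a) m K = gvec n a m K" for K
          unfolding matvec_def U_def using matvec_out[of m N A "\<lambda>j. gvec n a j K"] m1 False
          unfolding I_def by simp
        have "pb_hol n \<zeta> (\<lambda>K. fvec n a m K - matvec U (gvec n a) m K) p =
            pb_hol n \<zeta> (\<lambda>K. fvec n a m K - gvec n a m K) p"
          by (simp only: mv)
        also have "\<dots> = Fc (enum n m) p - Gc (enum n m) p"
          unfolding pb_hol_diff Fc_def Gc_def fvec_def gvec_def ..
        also have "\<dots> = 0"
        proof -
          have e: "enum n m \<in> nzmi n" "k < mdeg n (enum n m)" using eT2 mN by auto
          have "p < \<nu> * mdeg n (enum n m)" using bigdeg[OF e(2)] pD by simp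
          then show ?thesis using E1[OF e(1)] by simp
        qed
        finally show ?thesis .
      qed
    qed
  qed
  show ?thesis using UM hjet fin_part by blast
qed


end
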